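(* Let $n\ge2$ and $\lambda$ a partition of $n$ with $\lambda=\lambda'$. Let $R_\lambda:B_n\to\mathrm{GL}(V_\lambda)$ be the irreducible representation of $B_n$ over $\mathbb{Q}(s)$ afforded by the Hecke algebra $H_n(s)$ indexed by $\lambda$, and let $\epsilon:B_n\to\{\pm1\}$ be the character $\sigma_i\mapsto-1$. If $\epsilon$ occurs in the symmetric square $S^2R_\lambda$, then the corresponding nonzero symmetric bilinear form $\beta_\lambda$ on $V_\lambda$ (satisfying $\beta_\lambda(R_\lambda(b)x,R_\lambda(b)y)=\epsilon(b)\beta_\lambda(x,y)$) is hyperbolic over $\mathbb{Q}(s)$.
   Context: $s$ is an indeterminate. $B_n$ is the braid group with Artin generators $\sigma_1,\dots,\sigma_{n-1}$. $H_n(s)$ is the quotient of $\mathbb{Q}(s)B_n$ by $(\sigma_1-s)(\sigma_1+s^{-1})=0$; it is split semisimple over $\mathbb{Q}(s)$, with irreducible representations $R_\lambda$ indexed by partitions $\lambda$ of $n$ (deforming the Specht modules of $\mathfrak{S}_n$), and the restriction of $R_\lambda$ to $B_{n-1}$ is $\bigoplus_{\mu\nearrow\lambda}R_\mu$ (Young's rule, $\mu\nearrow\lambda$ meaning $\lambda$ is obtained from $\mu$ by adding one box). $\lambda'$ denotes the transposed partition. A nondegenerate symmetric bilinear form is hyperbolic if the quadratic space is an orthogonal sum of hyperbolic planes. *)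

theory Defs
  imports "HOL-Computational_Algebra.Polynomial" "HOL-Computational_Algebra.Fraction_Field"
begin

type_synonym Qs = "rat poly fract"

definition s_ind :: Qs where
  "s_ind = Fract [:0, 1:] 1"

text \<open>Partitions of n as weakly decreasing lists of positive integers; cells (row, column), 0-based.\<close>
definition is_partition :: "nat \<Rightarrow> nat list \<Rightarrow> bool" where
  "is_partition n lam \<longleftrightarrow> sorted_wrt (\<ge>) lam \<and> (\<forall>x\<in>set lam. 0 < x) \<and> sum_list lam = n"

definition diagram :: "nat list \<Rightarrow> (nat \<times> nat) set" where
  "diagram lam = {(i, j). i < length lam \<and> j < lam ! i}"

definition conj_partition :: "nat list \<Rightarrow> nat list" where
  "conj_partition lam =
     map (\<lambda>j. length (filter (\<lambda>r. j < r) lam)) [0..<(if lam = [] then 0 else hd lam)]"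

text \<open>Standard Young tableaux of shape lam: a tableau is the list whose k-th entry is the
  cell containing the number k+1; entries increase along rows and down columns.\<close>
definition syt :: "nat \<Rightarrow> nat list \<Rightarrow> (nat \<times> nat) list set" where
  "syt n lam = {ts. length ts = n \<and> distinct ts \<and> set ts = diagram lam \<and>
     (\<forall>k<n. \<forall>l<n. fst (ts ! k) \<le> fst (ts ! l) \<and> snd (ts ! k) \<le> snd (ts ! l) \<longrightarrow> k \<le> l)}"

definition content :: "nat \<times> nat \<Rightarrow> int" where
  "content c = int (snd c) - int (fst c)"

text \<open>Axial distance between the boxes containing i+1 and i+2 (0-based positions i, i+1).\<close>
definition axial :: "(nat \<times> nat) list \<Rightarrow> nat \<Rightarrow> int" where
  "axial ts i = content (ts ! Suc i) - content (ts ! i)"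

definition swap_tab :: "(nat \<times> nat) list \<Rightarrow> nat \<Rightarrow> (nat \<times> nat) list" where
  "swap_tab ts i = ts[i := ts ! Suc i, Suc i := ts ! i]"

definition qdiag :: "int \<Rightarrow> Qs" where
  "qdiag d = s_ind powi d * (s_ind - inverse s_ind) / (s_ind powi d - s_ind powi (- d))"

text \<open>Young's q-seminormal form of R_lambda (Hoefsmit): the basis of V_lambda is indexed by the
  standard tableaux; hecke_gen n lam i u t is the coefficient of v_u in R_lambda(sigma_(i+1)) v_t,
  for i < n - 1.  The generators satisfy (sigma - s)(sigma + s^-1) = 0 and the braid relations.\<close>
definition hecke_gen :: "nat \<Rightarrow> nat list \<Rightarrow> nat \<Rightarrow> (nat \<times> nat) list \<Rightarrow> (nat \<times> nat) list \<Rightarrow> Qs" where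
  "hecke_gen n lam i u t =
     (if t \<in> syt n lam \<and> u \<in> syt n lam then
        (if u = t then qdiag (axial t i)
         else if u = swap_tab t i then
           (if axial t i > 0 then 1 else 1 + qdiag (axial t i) * qdiag (- axial t i))
         else 0)
      else 0)"

definition mat_act :: "'b set \<Rightarrow> ('b \<Rightarrow> 'b \<Rightarrow> 'a::field) \<Rightarrow> ('b \<Rightarrow> 'a) \<Rightarrow> ('b \<Rightarrow> 'a)" where
  "mat_act I M x = (\<lambda>u. \<Sum>t\<in>I. M u t * x t)"

definition bil :: "'b set \<Rightarrow> ('b \<Rightarrow> 'b \<Rightarrow> 'a::field) \<Rightarrow> ('b \<Rightarrow> 'a) \<Rightarrow> ('b \<Rightarrow> 'a) \<Rightarrow> 'a" where
  "bil I B x y = (\<Sum>t\<in>I. \<Sum>u\<in>I. x t * B t u * y u)"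

text \<open>Hyperbolic: the space is an orthogonal sum of hyperbolic planes, i.e. it is spanned by
  vectors e_1..e_m, f_1..f_m with b(e_j,e_k) = b(f_j,f_k) = 0 and b(e_j,f_k) = delta_jk
  (such vectors are then automatically a basis and the form nondegenerate).\<close>
definition hyperbolic :: "'b set \<Rightarrow> ('b \<Rightarrow> 'b \<Rightarrow> 'a::field) \<Rightarrow> bool" where
  "hyperbolic I B \<longleftrightarrow> (\<exists>(m::nat) e f.
     (\<forall>x. \<exists>a b. \<forall>t\<in>I. x t = (\<Sum>j<m. a j * e j t + b j * f j t)) \<and>
     (\<forall>j<m. \<forall>k<m. bil I B (e j) (e k) = 0 \<and> bil I B (f j) (f k) = 0 \<and>
                   bil I B (e j) (f k) = (if j = k then 1 else 0)))"

end

theory Submission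
  imports Defs
begin


lemma s_pow_nat: "s_ind ^ m = Fract ([:0,1:] ^ m) 1"
  by (induction m) (simp_all add: s_ind_def One_fract_def)

lemma s_nz: "s_ind \<noteq> 0"
  by (simp add: s_ind_def Zero_fract_def eq_fract)

lemma s_pow_nat_one: "s_ind ^ m = 1 \<Longrightarrow> m = 0"
proof -
  assume "s_ind ^ m = 1"
  hence "[:0,1:] ^ m = (1::rat poly)" by (simp add: s_pow_nat One_fract_def eq_fract)
  hence "degree ([:0,1:] ^ m :: rat poly) = 0" by simp
  thus "m = 0" by (simp add: degree_power_eq)
qed

lemma s_powi_one: "s_ind powi m = 1 \<Longrightarrow> m = 0"
proof (cases "m \<ge> 0")
  case True
  assume "s_ind powi m = 1"
  hence "s_ind ^ nat m = 1" using True by (simp add: power_int_def)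
  thus ?thesis using s_pow_nat_one True by fastforce
next
  case False
  assume "s_ind powi m = 1"
  hence "inverse s_ind ^ nat (-m) = 1" using False by (simp add: power_int_def)
  hence "inverse (s_ind ^ nat (-m)) = 1" by (simp only: power_inverse)
  hence "s_ind ^ nat (-m) = 1" by (rule iffD1[OF inverse_eq_1_iff])
  thus ?thesis using s_pow_nat_one False by fastforce
qed

lemma s_powi_inj: "s_ind powi a = s_ind powi b \<Longrightarrow> a = b"
proof -
  assume h: "s_ind powi a = s_ind powi b"
  have "s_ind powi (a - b) = s_ind powi a / s_ind powi b" using s_nz by (simp add: power_int_diff)
  also have "\<dots> = 1" using h s_nz by simp
  finally show "a = b" using s_powi_one by fastforce
qed

lemma qdiag_rel: "qdiag d + s_ind powi (2*d) * qdiag (-d) = 0"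
proof -
  define X where "X = s_ind powi d"
  have X0: "X \<noteq> 0" using s_nz by (simp add: X_def)
  have a: "s_ind powi (-d) = inverse X" by (simp add: X_def power_int_minus)
  have b: "s_ind powi (2*d) = X * X" by (simp add: X_def power_int_mult power2_eq_square[symmetric] mult.commute[of 2])
  define c where "c = s_ind - inverse s_ind"
  have e1: "X * X * inverse X = X" using X0 by simp
  have e2: "inverse X - X = - (X - inverse X)" by simp
  have "qdiag d = X * c / (X - inverse X)" unfolding qdiag_def X_def c_def by (simp add: power_int_minus)
  moreover have "s_ind powi (2*d) * qdiag (-d) = - (X * c / (X - inverse X))"
    unfolding qdiag_def a b minus_minus X_def[symmetric] c_def[symmetric]
    apply (simp only: e2 divide_minus_right mult_minus_right)
    apply (simp only: times_divide_eq_right mult.assoc[symmetric] e1)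
    done
  ultimately show ?thesis by simp
qed

lemma qdiag_nz: "d \<noteq> 0 \<Longrightarrow> qdiag d \<noteq> 0"
proof -
  assume d: "d \<noteq> 0"
  have 1: "s_ind powi d \<noteq> 0" using s_nz by simp
  have 2: "s_ind - inverse s_ind \<noteq> 0"
  proof
    assume "s_ind - inverse s_ind = 0"
    hence "s_ind powi 1 = s_ind powi (-1)" by (simp add: power_int_minus)
    thus False using s_powi_inj by fastforce
  qed
  have 3: "s_ind powi d - s_ind powi (-d) \<noteq> 0"
  proof
    assume "s_ind powi d - s_ind powi (-d) = 0"
    hence "s_ind powi d = s_ind powi (-d)" by simp
    thus False using s_powi_inj d by fastforce
  qed
  show ?thesis unfolding qdiag_def using 1 2 3 by simp
qed

lemma qdiag_1: "qdiag 1 = s_ind"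
proof -
  have 2: "s_ind - inverse s_ind \<noteq> 0"
  proof
    assume "s_ind - inverse s_ind = 0"
    hence "s_ind powi 1 = s_ind powi (-1)" by (simp add: power_int_minus)
    thus False using s_powi_inj by fastforce
  qed
  thus ?thesis unfolding qdiag_def by (simp add: power_int_minus)
qed

lemma qdiag_m1: "qdiag (-1) = - inverse s_ind"
proof -
  have 2: "s_ind - inverse s_ind \<noteq> 0"
  proof
    assume "s_ind - inverse s_ind = 0"
    hence "s_ind powi 1 = s_ind powi (-1)" by (simp add: power_int_minus)
    thus False using s_powi_inj by fastforce
  qed
  have e: "inverse s_ind - s_ind = - (s_ind - inverse s_ind)" by simp
  have "qdiag (-1) = inverse s_ind * (s_ind - inverse s_ind) / (inverse s_ind - s_ind)"
    unfolding qdiag_def by (simp add: power_int_minus)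
  also have "\<dots> = - inverse s_ind" unfolding e divide_minus_right using 2
    by simp
  finally show ?thesis .
qed



definition tr :: "(nat \<times> nat) list \<Rightarrow> (nat \<times> nat) list" where
  "tr t = map prod.swap t"

locale YF =
  fixes n :: nat and lam :: "nat list"
  assumes n2: "2 \<le> n" and part: "is_partition n lam" and conj: "conj_partition lam = lam"
begin

lemma sorted_lam: "i < j \<Longrightarrow> j < length lam \<Longrightarrow> lam ! j \<le> lam ! i"
  using part unfolding is_partition_def by (simp add: sorted_wrt_iff_nth_less)

lemma lam_ne: "lam \<noteq> []"
  using part n2 unfolding is_partition_def by auto

lemma lam_pos: "i < length lam \<Longrightarrow> 0 < lam ! i"
  using part unfolding is_partition_def by auto

lemma diag_down: "(a', b) \<in> diagram lam \<Longrightarrow> a \<le> a' \<Longrightarrow> (a, b) \<in> diagram lam"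
proof -
  assume h: "(a', b) \<in> diagram lam" and a: "a \<le> a'"
  hence a1: "a' < length lam" "b < lam ! a'" unfolding diagram_def by auto
  have "lam ! a' \<le> lam ! a" using sorted_lam[of a a'] a a1 by (cases "a = a'") auto
  thus ?thesis using a1 a unfolding diagram_def by auto
qed

lemma diag_left: "(a, b') \<in> diagram lam \<Longrightarrow> b \<le> b' \<Longrightarrow> (a, b) \<in> diagram lam"
  unfolding diagram_def by auto

lemma diag00: "(0,0) \<in> diagram lam"
  using lam_ne lam_pos unfolding diagram_def by auto

lemma hd_max: "i < length lam \<Longrightarrow> lam ! i \<le> hd lam"
  using sorted_lam lam_ne by (cases i) (auto simp: hd_conv_nth)

lemma diag_sym: "(a, b) \<in> diagram lam \<Longrightarrow> (b, a) \<in> diagram lam"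
proof -
  assume h: "(a, b) \<in> diagram lam"
  hence a: "a < length lam" and b: "b < lam ! a" unfolding diagram_def by auto
  have bh: "b < hd lam" using hd_max[OF a] b by simp
  have cl: "conj_partition lam ! b = length (filter (\<lambda>r. b < r) lam)"
    unfolding conj_partition_def using lam_ne bh by simp
  have len: "length (conj_partition lam) = hd lam"
    unfolding conj_partition_def using lam_ne by simp
  have all: "\<forall>x\<in>set (take (Suc a) lam). b < x"
  proof
    fix x assume "x \<in> set (take (Suc a) lam)"
    then obtain p where p: "p < length (take (Suc a) lam)" "x = take (Suc a) lam ! p"
      by (metis in_set_conv_nth)
    hence pa: "p \<le> a" "x = lam ! p" by auto
    have "lam ! a \<le> lam ! p" using pa a sorted_lam by (cases "p = a") auto
    thus "b < x" using b pa by simp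
  qed
  have "length (filter (\<lambda>r. b < r) (take (Suc a) lam)) = Suc a"
    using all a by (simp add: filter_True)
  moreover have "length (filter (\<lambda>r. b < r) (take (Suc a) lam)) \<le> length (filter (\<lambda>r. b < r) lam)"
    by (metis append_take_drop_id filter_append le_add1 length_append)
  ultimately have "a < conj_partition lam ! b" using cl by simp
  hence "(b, a) \<in> diagram (conj_partition lam)" unfolding diagram_def using len bh by simp
  thus ?thesis using conj by simp
qed

abbreviation "I \<equiv> syt n lam"

lemma syt_len: "t \<in> I \<Longrightarrow> length t = n" unfolding syt_def by auto
lemma syt_dist: "t \<in> I \<Longrightarrow> distinct t" unfolding syt_def by auto
lemma syt_set: "t \<in> I \<Longrightarrow> set t = diagram lam" unfolding syt_def by auto
lemma syt_std: "t \<in> I \<Longrightarrow> k < n \<Longrightarrow> l < n \<Longrightarrow> fst (t ! k) \<le> fst (t ! l) \<Longrightarrow> snd (t ! k) \<le> snd (t ! l) \<Longrightarrow> k \<le> l"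
  unfolding syt_def by auto
lemma syt_cell: "t \<in> I \<Longrightarrow> c \<in> diagram lam \<Longrightarrow> \<exists>p<n. t ! p = c"
  using syt_set syt_len by (metis in_set_conv_nth)
lemma syt_in: "t \<in> I \<Longrightarrow> k < n \<Longrightarrow> t ! k \<in> diagram lam"
  using syt_set syt_len by (metis nth_mem)
lemma syt_inj: "t \<in> I \<Longrightarrow> k < n \<Longrightarrow> l < n \<Longrightarrow> t ! k = t ! l \<Longrightarrow> k = l"
  using syt_dist syt_len by (metis nth_eq_iff_index_eq)

lemma finite_diag: "finite (diagram lam)"
proof -
  have "diagram lam \<subseteq> {..<length lam} \<times> {..<hd lam}"
    unfolding diagram_def using hd_max by (auto, meson order_less_le_trans)
  thus ?thesis by (meson finite_SigmaI finite_lessThan finite_subset)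
qed

lemma finite_I: "finite I"
proof -
  have "I \<subseteq> {xs. set xs \<subseteq> diagram lam \<and> length xs = n}" unfolding syt_def by auto
  thus ?thesis using finite_lists_length_eq[OF finite_diag] by (meson finite_subset)
qed

lemma tr_in: "t \<in> I \<Longrightarrow> tr t \<in> I"
proof -
  assume t: "t \<in> I"
  have sw: "prod.swap ` diagram lam = diagram lam"
  proof
    show "prod.swap ` diagram lam \<subseteq> diagram lam" using diag_sym by auto
    show "diagram lam \<subseteq> prod.swap ` diagram lam"
    proof
      fix x assume "x \<in> diagram lam"
      hence "prod.swap x \<in> diagram lam" using diag_sym by (cases x) auto
      moreover have "x = prod.swap (prod.swap x)" by simp
      ultimately show "x \<in> prod.swap ` diagram lam" by blast
    qed
  qed
  have "set (tr t) = diagram lam"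
    using syt_set[OF t] sw unfolding tr_def by simp
  moreover have "distinct (tr t)" using syt_dist[OF t] unfolding tr_def
    by (simp add: distinct_map swap_inj_on)
  moreover have "length (tr t) = n" using syt_len[OF t] unfolding tr_def by simp
  moreover have "\<forall>k<n. \<forall>l<n. fst (tr t ! k) \<le> fst (tr t ! l) \<and> snd (tr t ! k) \<le> snd (tr t ! l) \<longrightarrow> k \<le> l"
    using syt_std[OF t] syt_len[OF t] unfolding tr_def by auto
  ultimately show ?thesis unfolding syt_def by blast
qed

lemma tr_tr[simp]: "tr (tr t) = t" unfolding tr_def by (simp add: comp_def)

lemma tr_content: "k < length t \<Longrightarrow> content (tr t ! k) = - content (t ! k)"
  unfolding tr_def content_def by simp

lemma tr_nth: "k < length t \<Longrightarrow> tr t ! k = prod.swap (t ! k)" unfolding tr_def by simp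

lemma tr_swap: "Suc i < length t \<Longrightarrow> tr (swap_tab t i) = swap_tab (tr t) i"
  unfolding tr_def swap_tab_def by (auto simp: map_update)

lemma axial_tr: "Suc i < length t \<Longrightarrow> axial (tr t) i = - axial t i"
  unfolding axial_def by (simp add: tr_content)

lemma swap_len[simp]: "length (swap_tab t i) = length t" unfolding swap_tab_def by simp

lemma swap_nth: "Suc i < length t \<Longrightarrow> swap_tab t i ! k = (if k = i then t ! Suc i else if k = Suc i then t ! i else t ! k)"
  unfolding swap_tab_def by (auto simp: nth_list_update)

lemma swap_swap: "Suc i < length t \<Longrightarrow> swap_tab (swap_tab t i) i = t"
  by (rule nth_equalityI) (auto simp: swap_nth)

lemma axial_swap: "Suc i < length t \<Longrightarrow> axial (swap_tab t i) i = - axial t i"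
  unfolding axial_def by (simp add: swap_nth)

lemma swap_ne: "t \<in> I \<Longrightarrow> Suc i < n \<Longrightarrow> swap_tab t i \<noteq> t"
proof
  assume t: "t \<in> I" and i: "Suc i < n" and e: "swap_tab t i = t"
  have "swap_tab t i ! i = t ! Suc i" using i syt_len[OF t] by (simp add: swap_nth)
  hence "t ! i = t ! Suc i" using e by simp
  thus False using syt_inj[OF t, of i "Suc i"] i by simp
qed

lemma swap_valid: "t \<in> I \<Longrightarrow> Suc i < n \<Longrightarrow>
   swap_tab t i \<in> I \<longleftrightarrow> \<not> (fst (t ! i) \<le> fst (t ! Suc i) \<and> snd (t ! i) \<le> snd (t ! Suc i))"
proof
  assume t: "t \<in> I" and i: "Suc i < n" and s: "swap_tab t i \<in> I"
  show "\<not> (fst (t ! i) \<le> fst (t ! Suc i) \<and> snd (t ! i) \<le> snd (t ! Suc i))"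
  proof
    assume "fst (t ! i) \<le> fst (t ! Suc i) \<and> snd (t ! i) \<le> snd (t ! Suc i)"
    hence "fst (swap_tab t i ! Suc i) \<le> fst (swap_tab t i ! i) \<and> snd (swap_tab t i ! Suc i) \<le> snd (swap_tab t i ! i)"
      using i syt_len[OF t] by (simp add: swap_nth)
    thus False using syt_std[OF s, of "Suc i" i] i by simp
  qed
next
  assume t: "t \<in> I" and i: "Suc i < n" and nc: "\<not> (fst (t ! i) \<le> fst (t ! Suc i) \<and> snd (t ! i) \<le> snd (t ! Suc i))"
  have L: "length t = n" using syt_len[OF t] .
  have "distinct (swap_tab t i)" using syt_dist[OF t] i L unfolding swap_tab_def by simp
  moreover have "set (swap_tab t i) = diagram lam" using syt_set[OF t] i L unfolding swap_tab_def by simp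
  moreover have "\<forall>k<n. \<forall>l<n. fst (swap_tab t i ! k) \<le> fst (swap_tab t i ! l) \<and> snd (swap_tab t i ! k) \<le> snd (swap_tab t i ! l) \<longrightarrow> k \<le> l"
  proof (intro allI impI)
    fix k l assume k: "k < n" and l: "l < n" and le: "fst (swap_tab t i ! k) \<le> fst (swap_tab t i ! l) \<and> snd (swap_tab t i ! k) \<le> snd (swap_tab t i ! l)"
    define p where "p x = (if x = i then Suc i else if x = Suc i then i else x)" for x
    have pn: "p x < n" if "x < n" for x using that i unfolding p_def by auto
    have "swap_tab t i ! x = t ! p x" for x using i L unfolding p_def by (simp add: swap_nth)
    hence "fst (t ! p k) \<le> fst (t ! p l) \<and> snd (t ! p k) \<le> snd (t ! p l)" using le by simp
    hence pkl: "p k \<le> p l" using syt_std[OF t] pn k l by blast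
    show "k \<le> l"
    proof (rule ccontr)
      assume "\<not> k \<le> l"
      hence "l < k" by simp
      with pkl have "k = Suc i \<and> l = i" unfolding p_def by (auto split: if_splits)
      thus False using le nc i L by (simp add: swap_nth)
    qed
  qed
  ultimately show "swap_tab t i \<in> I" unfolding syt_def using L by simp
qed

lemma content_inj_aux:
  assumes t: "t \<in> I" and w: "w \<in> I" and agree: "\<forall>j<k. t ! j = w ! j" and k: "k < n"
    and lt1: "fst (t ! k) < fst (w ! k)" and lt2: "snd (t ! k) < snd (w ! k)"
  shows False
proof -
  define c where "c = (fst (t ! k), snd (w ! k))"
  have "c \<in> diagram lam" unfolding c_def using diag_down[of "fst (w ! k)" "snd (w ! k)" "fst (t ! k)"] syt_in[OF w k] lt1 by simp
  then obtain p q where p: "p < n" "t ! p = c" and q: "q < n" "w ! q = c" using syt_cell t w by blast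
  have "k \<le> p" using syt_std[OF t k p(1)] p(2) lt2 unfolding c_def by simp
  have "q \<le> k" using syt_std[OF w q(1) k] q(2) lt1 unfolding c_def by simp
  moreover have "q \<noteq> k"
  proof
    assume "q = k"
    hence "w ! k = c" using q(2) by simp
    hence "fst (w ! k) = fst c" by (rule arg_cong)
    hence "fst (w ! k) = fst (t ! k)" unfolding c_def by (simp only: fst_conv)
    thus False using lt1 by simp
  qed
  ultimately have "q < k" by simp
  hence "t ! q = c" using agree q by simp
  hence "q = p" using syt_inj[OF t] p q by simp
  thus False using \<open>q < k\<close> \<open>k \<le> p\<close> by simp
qed

lemma content_inj:
  assumes t: "t \<in> I" and w: "w \<in> I" and cc: "\<forall>k<n. content (t ! k) = content (w ! k)"
  shows "t = w"
proof -
  have "\<forall>k. k < n \<longrightarrow> t ! k = w ! k"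
  proof (rule allI, induct_tac k rule: less_induct)
    fix k assume IH: "\<And>j. j < k \<Longrightarrow> j < n \<longrightarrow> t ! j = w ! j"
    show "k < n \<longrightarrow> t ! k = w ! k"
    proof
      assume k: "k < n"
      have ag: "\<forall>j<k. t ! j = w ! j" using IH k by auto
      have ag2: "\<forall>j<k. w ! j = t ! j" using ag by auto
      have c: "int (snd (t ! k)) - int (fst (t ! k)) = int (snd (w ! k)) - int (fst (w ! k))"
        using cc k unfolding content_def by simp
      show "t ! k = w ! k"
      proof (cases "fst (t ! k)" "fst (w ! k)" rule: linorder_cases)
        case less
        thus ?thesis using content_inj_aux[OF t w ag k] c by simp
      next
        case equal
        thus ?thesis using c by (simp add: prod_eq_iff)
      next
        case greater
        thus ?thesis using content_inj_aux[OF w t ag2 k] c by simp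
      qed
    qed
  qed
  thus ?thesis using syt_len t w by (metis nth_equalityI)
qed

lemma box2: "t \<in> I \<Longrightarrow> t ! 1 = (0,1) \<or> t ! 1 = (1,0)"
proof -
  assume t: "t \<in> I"
  obtain p where p: "p < n" "t ! p = (0,0)" using syt_cell[OF t diag00] by blast
  have "p \<le> 0" using syt_std[OF t p(1), of 0] p n2 by simp
  hence t0: "t ! 0 = (0,0)" using p by simp
  have n1: "1 < n" using n2 by simp
  obtain a b where ab: "t ! 1 = (a,b)" by fastforce
  have ne: "(a,b) \<noteq> (0,0)"
  proof
    assume "(a,b) = (0,0)"
    hence "t ! 0 = t ! 1" using t0 ab by simp
    thus False using syt_inj[OF t, of 0 1] n1 by simp
  qed
  have only: "c = (0,0)" if h: "c \<in> diagram lam" "fst c \<le> a" "snd c \<le> b" "c \<noteq> (a,b)" for c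
  proof -
    obtain q where q: "q < n" "t ! q = c" using syt_cell[OF t h(1)] by blast
    have "q \<le> 1" using syt_std[OF t q(1) n1] q(2) ab h by simp
    moreover have "q \<noteq> 1" using q ab h by auto
    ultimately have "q = 0" by simp
    thus ?thesis using q t0 by simp
  qed
  have abd: "(a,b) \<in> diagram lam" using syt_in[OF t n1] ab by simp
  show ?thesis
  proof (cases "a = 0")
    case True
    hence "b \<ge> 1" using ne by simp
    have "(0, b - 1) = (0,0)" using only[of "(0, b-1)"] diag_left[OF abd, of "b-1"] True \<open>b \<ge> 1\<close> by auto
    thus ?thesis using ab True \<open>b \<ge> 1\<close> by simp
  next
    case False
    have "(a - 1, b) = (0,0)" using only[of "(a-1, b)"] diag_down[OF abd, of "a-1"] False by auto
    hence "a = 1" "b = 0" using False by auto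
    thus ?thesis using ab by simp
  qed
qed

lemma tr_ne: "t \<in> I \<Longrightarrow> tr t \<noteq> t"
proof
  assume t: "t \<in> I" and e: "tr t = t"
  have "tr t ! 1 = prod.swap (t ! 1)" using syt_len[OF t] n2 by (simp add: tr_nth)
  thus False using e box2[OF t] by auto
qed

lemma consec: "t \<in> I \<Longrightarrow> Suc i < n \<Longrightarrow> swap_tab t i \<notin> I \<Longrightarrow> axial t i = 1 \<or> axial t i = -1"
proof -
  assume t: "t \<in> I" and i: "Suc i < n" and ns: "swap_tab t i \<notin> I"
  obtain a b where ab: "t ! i = (a,b)" by fastforce
  obtain a' b' where ab': "t ! Suc i = (a',b')" by fastforce
  have le: "a \<le> a'" "b \<le> b'" using swap_valid[OF t i] ns ab ab' by auto
  have d': "(a',b') \<in> diagram lam" using syt_in[OF t i] ab' by simp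
  have only: "c = (a,b)" if h: "c \<in> diagram lam" "a \<le> fst c" "b \<le> snd c" "fst c \<le> a'" "snd c \<le> b'" "c \<noteq> (a',b')" for c
  proof -
    obtain q where q: "q < n" "t ! q = c" using syt_cell[OF t h(1)] by blast
    have "q \<le> Suc i" using syt_std[OF t q(1) i] q(2) ab' h by simp
    moreover have "q \<noteq> Suc i" using q ab' h by auto
    moreover have "i \<le> q" using syt_std[OF t _ q(1), of i] i q(2) ab h by simp
    ultimately have "q = i" by simp
    thus ?thesis using q ab by simp
  qed
  have ne: "(a,b) \<noteq> (a',b')" using syt_inj[OF t, of i "Suc i"] i ab ab' by auto
  show ?thesis
  proof (cases "a = a'")
    case True
    hence "b < b'" using ne le by auto
    have "(a, b' - 1) = (a,b)" using only[of "(a, b'-1)"] diag_left[OF d', of "b'-1"] True \<open>b < b'\<close> by auto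
    hence "b' = Suc b" using \<open>b < b'\<close> by simp
    thus ?thesis unfolding axial_def content_def using ab ab' True by simp
  next
    case False
    hence "a < a'" using le by simp
    have "(a' - 1, b') = (a,b)" using only[of "(a'-1, b')"] diag_down[OF d', of "a'-1"] \<open>a < a'\<close> le by auto
    hence "a' = Suc a" "b' = b" using \<open>a < a'\<close> by auto
    thus ?thesis unfolding axial_def content_def using ab ab' by simp
  qed
qed

lemma connect:
  assumes cl: "\<And>t i. t \<in> I \<Longrightarrow> Suc i < n \<Longrightarrow> swap_tab t i \<in> I \<Longrightarrow> P (swap_tab t i) \<Longrightarrow> P t"
    and w: "w \<in> I" and Pw: "P w"
  shows "\<And>t. t \<in> I \<Longrightarrow> P t"
proof -
  have main: "\<forall>t\<in>I. (\<forall>j<n - d. t ! j = w ! j) \<longrightarrow> P t" for d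
  proof (induction d)
    case 0
    show ?case
    proof (intro ballI impI)
      fix t assume t: "t \<in> I" and ag: "\<forall>j<n - 0. t ! j = w ! j"
      have "t = w" using ag syt_len[OF t] syt_len[OF w] by (intro nth_equalityI) simp_all
      thus "P t" using Pw by simp
    qed
  next
    case (Suc d)
    show ?case
    proof (cases "d < n")
      case False
      hence "n - Suc d = n - d" by simp
      thus ?thesis using Suc by simp
    next
      case True
      define p where "p = n - Suc d"
      have pn: "p < n" using True p_def by simp
      have nd: "n - d = Suc p" using True p_def by linarith
      have IH: "P t" if t: "t \<in> I" and ag: "\<forall>j\<le>p. t ! j = w ! j" for t
      proof -
        have "\<forall>j<n - d. t ! j = w ! j" unfolding nd using ag by (simp add: less_Suc_eq_le)
        thus "P t" using Suc.IH t by blast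
      qed
      have inner: "p + m < n \<longrightarrow> (\<forall>t\<in>I. (\<forall>j<p. t ! j = w ! j) \<longrightarrow> t ! (p + m) = w ! p \<longrightarrow> P t)" for m
      proof (induction m)
        case 0
        show ?case
        proof (intro impI ballI)
          fix t assume t: "t \<in> I" and ag: "\<forall>j<p. t ! j = w ! j" and tp: "t ! (p + 0) = w ! p"
          have "\<forall>j\<le>p. t ! j = w ! j"
          proof (intro allI impI)
            fix j assume "j \<le> p"
            thus "t ! j = w ! j" using ag tp by (cases "j = p") auto
          qed
          thus "P t" using IH t by blast
        qed
      next
        case (Suc m)
        show ?case
        proof (intro ballI impI)
          fix t assume pm: "p + Suc m < n" and t: "t \<in> I" and ag: "\<forall>j<p. t ! j = w ! j" and tm: "t ! (p + Suc m) = w ! p"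
          define i where "i = p + m"
          have i: "Suc i < n" using pm i_def by simp
          have nc: "\<not> (fst (t ! i) \<le> fst (t ! Suc i) \<and> snd (t ! i) \<le> snd (t ! Suc i))"
          proof
            assume le: "fst (t ! i) \<le> fst (t ! Suc i) \<and> snd (t ! i) \<le> snd (t ! Suc i)"
            obtain q where q: "q < n" "w ! q = t ! i" using syt_cell[OF w syt_in[OF t]] i by (meson Suc_lessD)
            have "q \<le> p" using syt_std[OF w q(1) pn] q(2) le tm i_def by simp
            moreover have "q \<noteq> p"
            proof
              assume "q = p"
              hence "t ! i = t ! Suc i" using q tm i_def by simp
              thus False using syt_inj[OF t, of i "Suc i"] i by simp
            qed
            ultimately have "q < p" by simp
            hence "t ! q = t ! i" using ag q by simp
            hence "q = i" using syt_inj[OF t] q i by simp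
            thus False using \<open>q < p\<close> i_def by simp
          qed
          have s: "swap_tab t i \<in> I" using swap_valid[OF t i] nc by simp
          have "P (swap_tab t i)"
          proof -
            have "\<forall>j<p. swap_tab t i ! j = w ! j" using ag syt_len[OF t] i i_def by (simp add: swap_nth)
            moreover have "swap_tab t i ! (p + m) = w ! p" using tm syt_len[OF t] i i_def by (simp add: swap_nth)
            ultimately show ?thesis using Suc.IH s pm by simp
          qed
          thus "P t" using cl[OF t i s] by simp
        qed
      qed
      show ?thesis
      proof (intro ballI impI)
        fix t assume t: "t \<in> I" and ag: "\<forall>j<n - Suc d. t ! j = w ! j"
        obtain q where q: "q < n" "t ! q = w ! p" using syt_cell[OF t syt_in[OF w pn]] by blast
        have "p \<le> q"
        proof (rule ccontr)
          assume "\<not> p \<le> q"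
          hence "t ! q = w ! q" using ag p_def by simp
          hence "w ! q = w ! p" using q by simp
          thus False using syt_inj[OF w q(1) pn] \<open>\<not> p \<le> q\<close> by simp
        qed
        then obtain m where "q = p + m" using le_Suc_ex by blast
        thus "P t" using inner[of m] t ag q p_def by simp
      qed
    qed
  qed
  fix t assume "t \<in> I"
  thus "P t" using main[of n] by simp
qed

end


definition dl :: "'b \<Rightarrow> 'b \<Rightarrow> Qs" where "dl a = (\<lambda>v. if v = a then 1 else 0)"

lemma sum_dl: "finite S \<Longrightarrow> (\<Sum>t\<in>S. f t * dl a t) = (if a \<in> S then f a else 0)"
proof -
  assume S: "finite S"
  have "(\<Sum>t\<in>S. f t * dl a t) = (\<Sum>t\<in>S. if t = a then f t else 0)"
    by (intro sum.cong refl) (simp add: dl_def)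
  thus ?thesis using S by (simp add: sum.delta')
qed

lemma sum_dl': "finite S \<Longrightarrow> (\<Sum>t\<in>S. dl a t * f t) = (if a \<in> S then f a else 0)"
  using sum_dl[of S f a] by (simp add: mult.commute)

lemma bil_cong: "(\<And>v. v \<in> S \<Longrightarrow> x v = x' v) \<Longrightarrow> (\<And>v. v \<in> S \<Longrightarrow> y v = y' v) \<Longrightarrow> bil S B x y = bil S B x' y'"
  unfolding bil_def by (intro sum.cong refl) simp

lemma bil_lin_l: "bil S B (\<lambda>v. a * x v + b * y v) z = a * bil S B x z + b * bil S B y z"
  unfolding bil_def by (simp add: algebra_simps sum.distrib sum_distrib_left)

lemma bil_lin_r: "bil S B z (\<lambda>v. a * x v + b * y v) = a * bil S B z x + b * bil S B z y"
  unfolding bil_def by (simp add: algebra_simps sum.distrib sum_distrib_left)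

lemma bil_scale_l: "bil S B (\<lambda>v. a * x v) z = a * bil S B x z"
  unfolding bil_def by (simp add: algebra_simps sum_distrib_left)

lemma bil_scale_r: "bil S B z (\<lambda>v. a * x v) = a * bil S B z x"
  unfolding bil_def by (simp add: algebra_simps sum_distrib_left)

lemma bil_dl: "finite S \<Longrightarrow> a \<in> S \<Longrightarrow> b \<in> S \<Longrightarrow> bil S B (dl a) (dl b) = B a b"
  unfolding bil_def by (simp add: sum_dl sum_dl')

definition yc :: "(nat \<times> nat) list \<Rightarrow> nat \<Rightarrow> Qs" where
  "yc t i = (if axial t i > 0 then 1 else 1 + qdiag (axial t i) * qdiag (- axial t i))"

context YF begin

definition cf :: "(nat \<times> nat) list \<Rightarrow> nat \<Rightarrow> Qs" where
  "cf t i = (if swap_tab t i \<in> I then yc t i else 0)"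

lemma hg: "t \<in> I \<Longrightarrow> Suc i < n \<Longrightarrow>
  hecke_gen n lam i v t = qdiag (axial t i) * dl t v + cf t i * dl (swap_tab t i) v"
  using swap_ne[of t i] unfolding hecke_gen_def cf_def dl_def yc_def by auto

lemma act_dl: "t \<in> I \<Longrightarrow> Suc i < n \<Longrightarrow>
  mat_act I (hecke_gen n lam i) (dl t) = (\<lambda>v. qdiag (axial t i) * dl t v + cf t i * dl (swap_tab t i) v)"
  unfolding mat_act_def using finite_I by (simp add: sum_dl hg[symmetric])

definition Ev :: "nat \<Rightarrow> (nat \<times> nat) list \<Rightarrow> Qs" where
  "Ev k t = s_ind powi (2 * content (t ! k))"

lemma key_alg:
  fixes X Y q q' :: Qs
  assumes "q + Y * q' = 0"
  shows "q * q * X + (1 + q * q') * (X * Y) = X * Y"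
proof -
  have "q * q * X + (1 + q * q') * (X * Y) = X * Y + q * X * (q + Y * q')" by (simp add: algebra_simps)
  thus ?thesis using assms by simp
qed

lemma W_entry:
  assumes u: "u \<in> I" and v: "v \<in> I" and k: "Suc k < n"
  shows "(\<Sum>t\<in>I. hecke_gen n lam k u t * Ev k t * hecke_gen n lam k t v) = (if u = v then Ev (Suc k) u else 0)"
proof -
  define M where "M = hecke_gen n lam k"
  define v2 where "v2 = swap_tab v k"
  define d where "d = axial v k"
  have L: "length v = n" using syt_len[OF v] .
  have "(\<Sum>t\<in>I. M u t * Ev k t * M t v) = (\<Sum>t\<in>I. (M u t * Ev k t * qdiag d) * dl v t + (M u t * Ev k t * cf v k) * dl v2 t)"
    unfolding M_def v2_def d_def by (intro sum.cong refl) (simp add: hg[OF v k] algebra_simps)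
  also have "\<dots> = M u v * Ev k v * qdiag d + (if v2 \<in> I then M u v2 * Ev k v2 * cf v k else 0)"
    using finite_I v by (simp add: sum.distrib sum_dl)
  finally have S: "(\<Sum>t\<in>I. M u t * Ev k t * M t v) = M u v * Ev k v * qdiag d + (if v2 \<in> I then M u v2 * Ev k v2 * cf v k else 0)" .
  define a where "a = content (v ! k)"
  have Evv: "Ev k v = s_ind powi (2 * a)" unfolding Ev_def a_def ..
  have Es: "Ev (Suc k) v = s_ind powi (2 * a) * s_ind powi (2 * d)"
    unfolding Ev_def a_def d_def axial_def using s_nz by (simp add: power_int_add[symmetric] algebra_simps)
  have Muv: "M u v = qdiag d * dl v u + cf v k * dl v2 u" unfolding M_def d_def v2_def using hg[OF v k] .
  show ?thesis
  proof (cases "v2 \<in> I")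
    case True
    have v2v: "swap_tab v2 k = v" unfolding v2_def using swap_swap L k by simp
    have ax2: "axial v2 k = - d" unfolding v2_def d_def using axial_swap L k by simp
    have Ev2: "Ev k v2 = Ev (Suc k) v" unfolding Ev_def v2_def using L k by (simp add: swap_nth)
    have Muv2: "M u v2 = qdiag (- d) * dl v2 u + cf v2 k * dl v u" unfolding M_def using hg[OF True k] v2v ax2 by simp
    have q0: "qdiag 0 = 0" unfolding qdiag_def by simp
    have sv: "swap_tab v k \<in> I" using True v2_def by simp
    have cc: "cf v k * cf v2 k = 1 + qdiag d * qdiag (- d)"
    proof (cases "d > 0")
      case True
      thus ?thesis using sv \<open>v2 \<in> I\<close> v v2v ax2 unfolding cf_def yc_def d_def by (simp add: mult.commute)
    next
      case False
      show ?thesis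
      proof (cases "d = 0")
        case True
        thus ?thesis using sv \<open>v2 \<in> I\<close> v v2v ax2 q0 unfolding cf_def yc_def d_def by simp
      next
        case F: False
        thus ?thesis using False sv \<open>v2 \<in> I\<close> v v2v ax2 unfolding cf_def yc_def d_def by simp
      qed
    qed
    have rel: "qdiag d + s_ind powi (2 * d) * qdiag (- d) = 0" by (rule qdiag_rel)
    have ne: "v2 \<noteq> v" unfolding v2_def using swap_ne[OF v k] .
    show ?thesis
    proof (cases "u = v")
      case True
      have "M u v * Ev k v * qdiag d + M u v2 * Ev k v2 * cf v k
          = qdiag d * qdiag d * s_ind powi (2 * a) + (cf v k * cf v2 k) * (s_ind powi (2 * a) * s_ind powi (2 * d))"
        using True ne Muv Muv2 Evv Ev2 Es by (simp add: dl_def algebra_simps)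
      also have "\<dots> = s_ind powi (2 * a) * s_ind powi (2 * d)"
        unfolding cc by (rule key_alg[OF rel])
      finally show ?thesis using S True \<open>v2 \<in> I\<close> Es unfolding M_def by simp
    next
      case False
      show ?thesis
      proof (cases "u = v2")
        case True
        have "M u v * Ev k v * qdiag d + M u v2 * Ev k v2 * cf v k
            = cf v k * s_ind powi (2 * a) * (qdiag d + s_ind powi (2 * d) * qdiag (- d))"
          using True ne Muv Muv2 Evv Ev2 Es by (simp add: dl_def algebra_simps)
        also have "\<dots> = 0" using rel by simp
        finally show ?thesis using S False \<open>v2 \<in> I\<close> unfolding M_def by simp
      next
        case F2: False
        have "M u v = 0" "M u v2 = 0" using Muv Muv2 False F2 by (simp_all add: dl_def)
        thus ?thesis using S False unfolding M_def by simp
      qed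
    qed
  next
    case False
    have d1: "d = 1 \<or> d = -1" unfolding d_def v2_def using consec[OF v k] False v2_def by simp
    have cf0: "cf v k = 0" unfolding cf_def using False v2_def by simp
    show ?thesis
    proof (cases "u = v")
      case True
      have "M u v * Ev k v * qdiag d = qdiag d * qdiag d * s_ind powi (2 * a)"
        using True Muv Evv cf0 by (simp add: dl_def)
      also have "\<dots> = s_ind powi (2 * a) * s_ind powi (2 * d)"
      proof (cases "d = 1")
        case True
        thus ?thesis by (simp add: qdiag_1 power2_eq_square[symmetric] power_int_mult)
      next
        case False
        hence "d = -1" using d1 by simp
        thus ?thesis using s_nz by (simp add: qdiag_m1 power_int_minus power_int_mult power2_eq_square[symmetric] power_inverse)
      qed
      finally show ?thesis using S True False Es unfolding M_def by simp
    next
      case F: False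
      have "M u v = 0" using Muv F cf0 by (simp add: dl_def)
      thus ?thesis using S F False unfolding M_def by simp
    qed
  qed
qed

end


context YF begin

lemma t0: "t \<in> I \<Longrightarrow> t ! 0 = (0,0)"
proof -
  assume t: "t \<in> I"
  obtain p where p: "p < n" "t ! p = (0,0)" using syt_cell[OF t diag00] by blast
  have "p \<le> 0" using syt_std[OF t p(1), of 0] p n2 by simp
  thus "t ! 0 = (0,0)" using p by simp
qed

lemma axial_nz: assumes t: "t \<in> I" and i: "Suc i < n" shows "axial t i \<noteq> 0"
proof
  assume ax: "axial t i = 0"
  obtain a b where ab: "t ! i = (a,b)" by fastforce
  obtain a' b' where ab': "t ! Suc i = (a',b')" by fastforce
  have c: "int b' - int a' = int b - int a" using ax ab ab' unfolding axial_def content_def by simp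
  have ne: "(a,b) \<noteq> (a',b')" using syt_inj[OF t, of i "Suc i"] i ab ab' by auto
  show False
  proof (cases "a' \<le> a")
    case True
    hence "b' \<le> b" using c by simp
    thus False using syt_std[OF t i, of i] True ab ab' i by simp
  next
    case False
    hence lt: "a < a'" "b < b'" using c by auto
    have d': "(a',b') \<in> diagram lam" using syt_in[OF t i] ab' by simp
    have "(a, b') \<in> diagram lam" using diag_down[OF d', of a] lt by simp
    hence "(a, Suc b) \<in> diagram lam" using diag_left[of a b' "Suc b"] lt by simp
    then obtain q where q: "q < n" "t ! q = (a, Suc b)" using syt_cell[OF t] by blast
    have "i \<le> q" using syt_std[OF t _ q(1), of i] i q(2) ab by simp
    moreover have "q \<noteq> i" using q ab by auto
    moreover have "q \<le> Suc i" using syt_std[OF t q(1) i] q(2) ab' lt by simp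
    moreover have "q \<noteq> Suc i" using q ab' lt by auto
    ultimately show False by simp
  qed
qed

end

locale YFB = YF +
  fixes B :: "(nat \<times> nat) list \<Rightarrow> (nat \<times> nat) list \<Rightarrow> Qs"
  assumes eps_inv: "\<forall>i < n - 1. \<forall>x y.
        bil (syt n lam) B (mat_act (syt n lam) (hecke_gen n lam i) x)
                          (mat_act (syt n lam) (hecke_gen n lam i) y)
        = - bil (syt n lam) B x y"
begin

abbreviation "act i \<equiv> mat_act I (hecke_gen n lam i)"

fun J :: "nat \<Rightarrow> ((nat \<times> nat) list \<Rightarrow> Qs) \<Rightarrow> ((nat \<times> nat) list \<Rightarrow> Qs)" where
  "J 0 x = x"
| "J (Suc k) x = act k (J k (act k x))"

lemma J_eig: "k < n \<Longrightarrow> \<forall>x. \<forall>u\<in>I. J k x u = Ev k u * x u"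
proof (induction k)
  case 0
  show ?case by (simp add: Ev_def content_def t0)
next
  case (Suc k)
  have k: "Suc k < n" using Suc.prems .
  have IH: "\<forall>x. \<forall>u\<in>I. J k x u = Ev k u * x u" using Suc.IH k by simp
  show ?case
  proof (intro allI ballI)
    fix x u assume u: "u \<in> I"
    define M where "M = hecke_gen n lam k"
    have "J (Suc k) x u = (\<Sum>t\<in>I. M u t * J k (act k x) t)" by (simp add: mat_act_def M_def)
    also have "\<dots> = (\<Sum>t\<in>I. M u t * (Ev k t * (\<Sum>v\<in>I. M t v * x v)))"
      using IH by (intro sum.cong refl) (simp add: mat_act_def M_def)
    also have "\<dots> = (\<Sum>t\<in>I. \<Sum>v\<in>I. (M u t * Ev k t * M t v) * x v)"
      by (simp add: sum_distrib_left algebra_simps)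
    also have "\<dots> = (\<Sum>v\<in>I. (\<Sum>t\<in>I. M u t * Ev k t * M t v) * x v)"
      by (subst sum.swap) (simp add: sum_distrib_right)
    also have "\<dots> = (\<Sum>v\<in>I. (if u = v then Ev (Suc k) u else 0) * x v)"
      using W_entry[OF u _ k] by (intro sum.cong refl) (simp add: M_def)
    also have "\<dots> = (\<Sum>v\<in>I. if v = u then Ev (Suc k) u * x u else 0)"
      by (intro sum.cong refl) auto
    also have "\<dots> = Ev (Suc k) u * x u" using u finite_I by (simp add: sum.delta')
    finally show "J (Suc k) x u = Ev (Suc k) u * x u" .
  qed
qed

lemma J_inv: "k < n \<Longrightarrow> \<forall>x y. bil I B (J k x) (J k y) = bil I B x y"
proof (induction k)
  case 0
  then show ?case by simp
next
  case (Suc k)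
  have k: "k < n - 1" using Suc.prems by simp
  show ?case
  proof (intro allI)
    fix x y
    have "bil I B (J (Suc k) x) (J (Suc k) y) = - bil I B (J k (act k x)) (J k (act k y))"
      using eps_inv k by simp
    also have "\<dots> = - bil I B (act k x) (act k y)" using Suc by simp
    also have "\<dots> = bil I B x y" using eps_inv k by simp
    finally show "bil I B (J (Suc k) x) (J (Suc k) y) = bil I B x y" .
  qed
qed

lemma offdiag: assumes t: "t \<in> I" and u: "u \<in> I" and nz: "B t u \<noteq> 0" shows "u = tr t"
proof -
  have "\<forall>k<n. content (u ! k) = content (tr t ! k)"
  proof (intro allI impI)
    fix k assume k: "k < n"
    have "bil I B (J k (dl t)) (J k (dl u)) = bil I B (\<lambda>v. Ev k t * dl t v) (\<lambda>v. Ev k u * dl u v)"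
      using J_eig[OF k] by (intro bil_cong) (auto simp: dl_def)
    also have "\<dots> = Ev k t * Ev k u * B t u"
      by (simp add: bil_scale_l bil_scale_r bil_dl[OF finite_I t u])
    finally have "Ev k t * Ev k u * B t u = B t u" using J_inv[OF k] bil_dl[OF finite_I t u] by simp
    hence "Ev k t * Ev k u = 1" using nz by simp
    hence "s_ind powi (2 * content (t ! k) + 2 * content (u ! k)) = 1"
      unfolding Ev_def using s_nz by (simp add: power_int_add)
    hence "2 * content (t ! k) + 2 * content (u ! k) = 0" by (rule s_powi_one)
    thus "content (u ! k) = content (tr t ! k)" using tr_content syt_len[OF t] k by simp
  qed
  thus ?thesis using content_inj[OF u tr_in[OF t]] by simp
qed

lemma pair_rel:
  assumes t: "t \<in> I" and i: "Suc i < n" and t2: "swap_tab t i \<in> I" and pos: "axial t i > 0"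
  shows "B t (tr t) + B (swap_tab t i) (tr (swap_tab t i)) = 0"
proof -
  define t2 where "t2 = swap_tab t i"
  define d where "d = axial t i"
  define u where "u = tr t2"
  have L: "length t = n" using syt_len[OF t] .
  have t2I: "t2 \<in> I" using t2 t2_def by simp
  have uI: "u \<in> I" using tr_in[OF t2I] u_def by simp
  have u_sw: "u = swap_tab (tr t) i" unfolding u_def t2_def using tr_swap L i by simp
  have sw_u: "swap_tab u i = tr t" unfolding u_sw using swap_swap[of i "tr t"] L i by (simp add: tr_def)
  have ax_u: "axial u i = d" unfolding u_sw d_def using axial_swap[of i "tr t"] axial_tr[of i t] L i by (simp add: tr_def)
  have cft: "cf t i = 1" unfolding cf_def yc_def using t2 pos by simp
  have cfu: "cf u i = 1" unfolding cf_def yc_def using sw_u tr_in[OF t] ax_u pos d_def by simp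
  have a1: "act i (dl t) = (\<lambda>v. qdiag d * dl t v + 1 * dl t2 v)"
    using act_dl[OF t i] cft unfolding d_def t2_def by simp
  have a2: "act i (dl u) = (\<lambda>v. qdiag d * dl u v + 1 * dl (tr t) v)"
    using act_dl[OF uI i] cfu ax_u sw_u by simp
  have ne: "t2 \<noteq> t" unfolding t2_def using swap_ne[OF t i] .
  have z1: "B t u = 0"
  proof (rule ccontr)
    assume "B t u \<noteq> 0"
    hence "u = tr t" using offdiag[OF t uI] by simp
    hence "t2 = t" unfolding u_def by (metis tr_tr)
    thus False using ne by simp
  qed
  have z2: "B t2 (tr t) = 0"
  proof (rule ccontr)
    assume "B t2 (tr t) \<noteq> 0"
    hence "tr t = tr t2" using offdiag[OF t2I tr_in[OF t]] by simp
    hence "t2 = t" by (metis tr_tr)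
    thus False using ne by simp
  qed
  have "bil I B (act i (dl t)) (act i (dl u)) = - bil I B (dl t) (dl u)" using eps_inv i by simp
  also have "\<dots> = 0" using bil_dl[OF finite_I t uI] z1 by simp
  finally have "0 = bil I B (act i (dl t)) (act i (dl u))" by simp
  also have "\<dots> = qdiag d * (qdiag d * B t u + B t (tr t)) + (qdiag d * B t2 u + B t2 (tr t))"
    unfolding a1 a2 bil_lin_l bil_lin_r
    using bil_dl[OF finite_I] t t2I uI tr_in[OF t] by simp
  also have "\<dots> = qdiag d * (B t (tr t) + B t2 u)" using z1 z2 by (simp add: algebra_simps)
  finally have "qdiag d * (B t (tr t) + B t2 u) = 0" by simp
  moreover have "qdiag d \<noteq> 0" using qdiag_nz pos d_def by simp
  ultimately show ?thesis unfolding u_def t2_def by simp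
qed

lemma pair_rel': 
  assumes t: "t \<in> I" and i: "Suc i < n" and t2: "swap_tab t i \<in> I"
  shows "B t (tr t) = 0 \<longleftrightarrow> B (swap_tab t i) (tr (swap_tab t i)) = 0"
proof (cases "axial t i > 0")
  case True
  thus ?thesis using pair_rel[OF t i t2] by (auto simp: add_eq_0_iff)
next
  case False
  have L: "length t = n" using syt_len[OF t] .
  have ne: "axial t i \<noteq> 0" using axial_nz[OF t i] .
  have "axial (swap_tab t i) i > 0" using axial_swap[of i t] L i False ne by simp
  moreover have "swap_tab (swap_tab t i) i = t" using swap_swap L i by simp
  ultimately have "B (swap_tab t i) (tr (swap_tab t i)) + B t (tr t) = 0"
    using pair_rel[OF t2 i] t by simp
  thus ?thesis by (auto simp: add_eq_0_iff)
qed

end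


context YFB begin

lemma diag_nz:
  assumes nz: "\<exists>t\<in>I. \<exists>u\<in>I. B t u \<noteq> 0"
  shows "\<forall>t\<in>I. B t (tr t) \<noteq> 0"
proof (rule ccontr)
  assume "\<not> (\<forall>t\<in>I. B t (tr t) \<noteq> 0)"
  then obtain w where w: "w \<in> I" "B w (tr w) = 0" by blast
  have all: "B t (tr t) = 0" if t: "t \<in> I" for t
    using connect[where P = "\<lambda>t. B t (tr t) = 0", OF _ w t] pair_rel' by blast
  from nz obtain t u where tu: "t \<in> I" "u \<in> I" "B t u \<noteq> 0" by blast
  hence "u = tr t" using offdiag by blast
  thus False using all[OF tu(1)] tu(3) by simp
qed

lemma hyp:
  assumes nz: "\<exists>t\<in>I. \<exists>u\<in>I. B t u \<noteq> 0"
  shows "hyperbolic I B"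
proof -
  have NZ: "\<And>t. t \<in> I \<Longrightarrow> B t (tr t) \<noteq> 0" using diag_nz[OF nz] by blast
  define E where "E = {t\<in>I. t ! 1 = (0,1)}"
  have fE: "finite E" unfolding E_def using finite_I by simp
  obtain g where g: "bij_betw g {0..<card E} E" using ex_bij_betw_nat_finite[OF fE] by blast
  define m where "m = card E"
  have gE: "\<And>j. j < m \<Longrightarrow> g j \<in> E" using g unfolding m_def bij_betw_def by auto
  have gI: "\<And>j. j < m \<Longrightarrow> g j \<in> I" using gE unfolding E_def by auto
  have ginj: "\<And>j k. j < m \<Longrightarrow> k < m \<Longrightarrow> g j = g k \<Longrightarrow> j = k"
    using g unfolding m_def bij_betw_def inj_on_def by auto
  have gsurj: "\<And>t. t \<in> E \<Longrightarrow> \<exists>j<m. g j = t"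
    using g unfolding m_def bij_betw_def by (metis atLeastLessThan_iff imageE)
  have n1: "1 < n" using n2 by simp
  have trE: "\<And>t. t \<in> I \<Longrightarrow> tr t \<in> E \<longleftrightarrow> t \<notin> E"
  proof -
    fix t assume t: "t \<in> I"
    have "tr t ! 1 = prod.swap (t ! 1)" using syt_len[OF t] n1 by (simp add: tr_nth)
    thus "tr t \<in> E \<longleftrightarrow> t \<notin> E" unfolding E_def using box2[OF t] tr_in[OF t] t by auto
  qed
  define c where "c j = inverse (B (g j) (tr (g j)))" for j
  define e where "e j = dl (g j)" for j
  define f where "f j = (\<lambda>v. c j * dl (tr (g j)) v)" for j
  have BZ: "B t u = 0" if "t \<in> I" "u \<in> I" "u \<noteq> tr t" for t u using offdiag that by blast
  have span: "\<forall>x. \<exists>a b. \<forall>t\<in>I. x t = (\<Sum>j<m. a j * e j t + b j * f j t)"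
  proof
    fix x :: "(nat \<times> nat) list \<Rightarrow> Qs"
    define a where "a j = x (g j)" for j
    define b where "b j = x (tr (g j)) * B (g j) (tr (g j))" for j
    have "\<forall>t\<in>I. x t = (\<Sum>j<m. a j * e j t + b j * f j t)"
    proof
      fix t assume t: "t \<in> I"
      show "x t = (\<Sum>j<m. a j * e j t + b j * f j t)"
      proof (cases "t \<in> E")
        case True
        then obtain j0 where j0: "j0 < m" "g j0 = t" using gsurj by blast
        have "(\<Sum>j<m. a j * e j t + b j * f j t) = (\<Sum>j<m. if j = j0 then x t else 0)"
        proof (intro sum.cong refl)
          fix j assume j: "j \<in> {..<m}"
          have "tr (g j) \<noteq> t" using trE[OF gI] j gE True by auto
          moreover have "g j = t \<longleftrightarrow> j = j0" using ginj j j0 by auto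
          ultimately show "a j * e j t + b j * f j t = (if j = j0 then x t else 0)"
            unfolding e_def f_def dl_def a_def using j0 by auto
        qed
        also have "\<dots> = x t" using j0 by simp
        finally show ?thesis by simp
      next
        case False
        hence "tr t \<in> E" using trE[OF t] by simp
        then obtain j0 where j0: "j0 < m" "g j0 = tr t" using gsurj by blast
        have "(\<Sum>j<m. a j * e j t + b j * f j t) = (\<Sum>j<m. if j = j0 then x t else 0)"
        proof (intro sum.cong refl)
          fix j assume j: "j \<in> {..<m}"
          have "g j \<noteq> t" using j gE False by auto
          moreover have "tr (g j) = t \<longleftrightarrow> j = j0" using ginj j j0 by (metis lessThan_iff tr_tr)
          moreover have "b j0 * c j0 = x t" unfolding b_def c_def using j0 NZ[OF gI[OF j0(1)]] by simp
          ultimately show "a j * e j t + b j * f j t = (if j = j0 then x t else 0)"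
            unfolding e_def f_def dl_def by auto
        qed
        also have "\<dots> = x t" using j0 by simp
        finally show ?thesis by simp
      qed
    qed
    thus "\<exists>a b. \<forall>t\<in>I. x t = (\<Sum>j<m. a j * e j t + b j * f j t)" by blast
  qed
  have forms: "\<forall>j<m. \<forall>k<m. bil I B (e j) (e k) = 0 \<and> bil I B (f j) (f k) = 0 \<and>
                   bil I B (e j) (f k) = (if j = k then 1 else 0)"
  proof (intro allI impI conjI)
    fix j k assume j: "j < m" and k: "k < m"
    have trI: "tr (g j) \<in> I" "tr (g k) \<in> I" using tr_in gI j k by auto
    have nE: "tr (g j) \<notin> E" "tr (g k) \<notin> E" using trE gI gE j k by auto
    have "g k \<noteq> tr (g j)" using gE[OF k] nE by auto
    hence "B (g j) (g k) = 0" using BZ[OF gI[OF j] gI[OF k]] by simp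
    thus "bil I B (e j) (e k) = 0" unfolding e_def using bil_dl[OF finite_I gI[OF j] gI[OF k]] by simp
    have "tr (g k) \<noteq> g j" using gE[OF j] nE by auto
    hence "B (tr (g j)) (tr (g k)) = 0" using BZ[OF trI] by simp
    thus "bil I B (f j) (f k) = 0" unfolding f_def using bil_dl[OF finite_I trI]
      by (simp add: bil_scale_l bil_scale_r)
    have "bil I B (e j) (f k) = c k * B (g j) (tr (g k))" unfolding e_def f_def
      using bil_dl[OF finite_I gI[OF j] trI(2)] by (simp add: bil_scale_r)
    also have "\<dots> = (if j = k then 1 else 0)"
    proof (cases "j = k")
      case True
      thus ?thesis unfolding c_def using NZ[OF gI[OF j]] by simp
    next
      case False
      have "g j \<noteq> g k" using ginj j k False by auto
      hence "tr (g k) \<noteq> tr (g j)" by (metis tr_tr)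
      thus ?thesis using BZ[OF gI[OF j] trI(2)] False by simp
    qed
    finally show "bil I B (e j) (f k) = (if j = k then 1 else 0)" .
  qed
  show ?thesis unfolding hyperbolic_def using span forms by blast
qed

end

theorem mainTheorem14:
  fixes n :: nat and lam :: "nat list" and B :: "(nat \<times> nat) list \<Rightarrow> (nat \<times> nat) list \<Rightarrow> Qs"
  assumes "n \<ge> 2"
    and "is_partition n lam"
    and "conj_partition lam = lam"
    and symm: "\<forall>t\<in>syt n lam. \<forall>u\<in>syt n lam. B t u = B u t"
    and nonzero: "\<exists>t\<in>syt n lam. \<exists>u\<in>syt n lam. B t u \<noteq> 0"
    and eps_inv: "\<forall>i < n - 1. \<forall>x y.
        bil (syt n lam) B (mat_act (syt n lam) (hecke_gen n lam i) x)
                          (mat_act (syt n lam) (hecke_gen n lam i) y)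
        = - bil (syt n lam) B x y"
  shows "hyperbolic (syt n lam) B"
proof -
  interpret YFB n lam B
    by unfold_locales (use assms in auto)
  show ?thesis using hyp nonzero by blast
qed

end
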